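(* (1) For $n\ge1$, the primary theta-seed $\Delta_1(\boldsymbol{\theta}_n)$ is nonzero. (2) For $n\ge3$, the secondary theta-seed $\Delta_2(\boldsymbol{\theta}_n)$ is nonzero.
   Context: Let $\mathbb{Q}[\boldsymbol{\theta}_n,\boldsymbol{\xi}_n,\boldsymbol{\rho}_n]$ be the $\mathbb{Q}$-algebra generated by $3n$ pairwise anticommuting variables $\theta_i,\xi_i,\rho_i$ ($1\le i\le n$) (the exterior algebra on them), with $\mathfrak{S}_n$ acting by permuting indices simultaneously in all three sets. Define $\Delta_1(\boldsymbol{\theta}_n):=\sum_{\sigma\in\mathfrak{S}_n}\mathrm{sgn}(\sigma)\sigma(\theta_1\theta_2\cdots\theta_{n-1})$ and, for $n\ge3$, $\Delta_2(\boldsymbol{\theta}_n):=\sum_{\sigma\in\mathfrak{S}_n}\mathrm{sgn}(\sigma)\sigma\bigl((\theta_1\xi_2\rho_2+\theta_2\xi_1\rho_2+\theta_2\xi_2\rho_1)\theta_3\theta_4\cdots\theta_{n-1}\bigr)$, where empty products of $\theta$'s are $1$. *)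

theory Defs
  imports Complex_Main "HOL-Combinatorics.Permutations" "HOL-Library.Product_Lexorder"
begin

text \<open>Model of the exterior algebra Q[theta_n, xi_n, rho_n].
  The exterior algebra has the Q-basis of increasing monomials (products of the generators of a
  finite set S in increasing lexicographic order); an element is represented by its coefficient
  function on these basis monomials (finite sets of generators).\<close>

type_synonym gen = "nat \<times> nat"
type_synonym ext = "gen set \<Rightarrow> rat"

definition theta :: "nat \<Rightarrow> gen" where "theta i = (0, i)"
definition xi :: "nat \<Rightarrow> gen" where "xi i = (1, i)"
definition rho :: "nat \<Rightarrow> gen" where "rho i = (2, i)"

definition inv_count :: "gen list \<Rightarrow> nat" where
  "inv_count w = card {(i, j). i < j \<and> j < length w \<and> w ! j < w ! i}"

text \<open>The element of the exterior algebra given by the product of the generators in the word w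
  (zero if a generator repeats; otherwise the sign of sorting times the basis monomial).\<close>
definition word_elt :: "gen list \<Rightarrow> ext" where
  "word_elt w = (\<lambda>S. if distinct w \<and> S = set w then (-1) ^ inv_count w else 0)"

definition perm_word :: "(nat \<Rightarrow> nat) \<Rightarrow> gen list \<Rightarrow> gen list" where
  "perm_word \<sigma> w = map (\<lambda>(k, i). (k, \<sigma> i)) w"

definition alt :: "nat \<Rightarrow> gen list \<Rightarrow> ext" where
  "alt n w = (\<lambda>S. \<Sum>\<sigma> \<in> {\<sigma>. \<sigma> permutes {1..n}}. of_int (sign \<sigma>) * word_elt (perm_word \<sigma> w) S)"

definition Delta1 :: "nat \<Rightarrow> ext" where
  "Delta1 n = alt n (map theta [1..<n])"

text \<open>Delta_2 = sum sgn(sigma) sigma((theta_1 xi_2 rho_2 + theta_2 xi_1 rho_2 + theta_2 xi_2 rho_1)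
  theta_3 ... theta_{n-1}), expanded by linearity of the action.\<close>
definition Delta2 :: "nat \<Rightarrow> ext" where
  "Delta2 n = (\<lambda>S.
      alt n ([theta 1, xi 2, rho 2] @ map theta [3..<n]) S
    + alt n ([theta 2, xi 1, rho 2] @ map theta [3..<n]) S
    + alt n ([theta 2, xi 2, rho 1] @ map theta [3..<n]) S)"

end

theory Submission
  imports Defs
begin


definition PP :: "'a::linorder set \<Rightarrow> ('a \<times> 'a) set" where
  "PP X = {(x,y). x \<in> X \<and> y \<in> X \<and> x < y}"

definition cc :: "'a::linorder \<Rightarrow> 'a \<Rightarrow> int" where
  "cc x y = (if y < x then -1 else 1)"

lemma PP_finite: "finite X \<Longrightarrow> finite (PP X)"
  unfolding PP_def by (rule finite_subset[of _ "X \<times> X"]) auto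

lemma reindex_pairs:
  fixes h :: "'a::linorder \<Rightarrow> 'b::linorder"
  assumes inj: "inj_on h I"
    and sym: "\<And>x y. x \<in> h ` I \<Longrightarrow> y \<in> h ` I \<Longrightarrow> g x y = g y x"
  shows "(\<Prod>(i,j)\<in>PP I. g (h i) (h j)) = (\<Prod>(x,y)\<in>PP (h ` I). (g x y :: 'c::comm_monoid_mult))"
proof -
  define \<phi> where "\<phi> = (\<lambda>(i,j). (min (h i) (h j), max (h i) (h j)))"
  have bij: "bij_betw \<phi> (PP I) (PP (h ` I))"
  proof (rule bij_betwI')
    fix p q assume p: "p \<in> PP I" and q: "q \<in> PP I"
    obtain i j where pij: "p = (i,j)" by (cases p)
    obtain k l where qkl: "q = (k,l)" by (cases q)
    have ij: "i \<in> I" "j \<in> I" "i < j" using p pij by (auto simp: PP_def)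
    have kl: "k \<in> I" "l \<in> I" "k < l" using q qkl by (auto simp: PP_def)
    have hij: "h i \<noteq> h j" using inj ij by (metis inj_on_contraD less_irrefl)
    have hkl: "h k \<noteq> h l" using inj kl by (metis inj_on_contraD less_irrefl)
    show "(\<phi> p = \<phi> q) = (p = q)"
    proof
      assume "\<phi> p = \<phi> q"
      hence "{h i, h j} = {h k, h l}" using hij hkl unfolding \<phi>_def pij qkl
        by (auto simp: min_def max_def split: if_splits)
      hence "(h i = h k \<and> h j = h l) \<or> (h i = h l \<and> h j = h k)" by (auto simp: doubleton_eq_iff)
      hence "(i = k \<and> j = l) \<or> (i = l \<and> j = k)" using inj ij kl by (auto dest: inj_onD)
      thus "p = q" using ij kl pij qkl by auto
    qed simp
  next
    fix p assume p: "p \<in> PP I"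
    then obtain i j where ij: "p = (i,j)" "i \<in> I" "j \<in> I" "i < j" by (auto simp: PP_def)
    have "h i \<noteq> h j" using inj ij by (metis inj_on_contraD less_irrefl)
    then show "\<phi> p \<in> PP (h ` I)" unfolding \<phi>_def PP_def using ij
      by (auto simp: min_def max_def)
  next
    fix q assume q: "q \<in> PP (h ` I)"
    then obtain i j where ij: "i \<in> I" "j \<in> I" "q = (h i, h j)" "h i < h j" by (auto simp: PP_def)
    have "i \<noteq> j" using ij by auto
    show "\<exists>p\<in>PP I. q = \<phi> p"
    proof (cases "i < j")
      case True thus ?thesis using ij by (intro bexI[of _ "(i,j)"]) (auto simp: PP_def \<phi>_def)
    next
      case False hence "j < i" using \<open>i \<noteq> j\<close> by auto
      thus ?thesis using ij by (intro bexI[of _ "(j,i)"]) (auto simp: PP_def \<phi>_def)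
    qed
  qed
  have "(\<Prod>(x,y)\<in>PP (h ` I). g x y) = (\<Prod>p\<in>PP I. (\<lambda>(x,y). g x y) (\<phi> p))"
    using prod.reindex_bij_betw[OF bij, of "\<lambda>(x,y). g x y"] by simp
  also have "\<dots> = (\<Prod>(i,j)\<in>PP I. g (h i) (h j))"
  proof (rule prod.cong[OF refl])
    fix p assume "p \<in> PP I"
    then obtain i j where "p = (i,j)" "i \<in> I" "j \<in> I" by (auto simp: PP_def)
    thus "(\<lambda>(x,y). g x y) (\<phi> p) = (\<lambda>(i,j). g (h i) (h j)) p"
      using sym[of "h i" "h j"] by (auto simp: \<phi>_def min_def max_def)
  qed
  finally show ?thesis by simp
qed

lemma cc_sq: "cc x y * cc x y = 1" by (simp add: cc_def)
lemma cc_swap: "x \<noteq> y \<Longrightarrow> cc y x = - cc x y" by (auto simp: cc_def)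

lemma general_G:
  fixes h :: "'a::linorder \<Rightarrow> 'b::linorder" and f :: "'b \<Rightarrow> 'c::linorder"
  assumes inj: "inj_on h I" and injf: "inj_on f (h ` I)"
  shows "(\<Prod>(i,j)\<in>PP I. cc (f (h i)) (f (h j))) =
         (\<Prod>(i,j)\<in>PP I. cc (h i) (h j)) * (\<Prod>(x,y)\<in>PP (h ` I). cc (f x) (f y))"
proof -
  define g where "g = (\<lambda>x y. cc (f x) (f y) * cc x y)"
  have sym: "g x y = g y x" if "x \<in> h ` I" "y \<in> h ` I" for x y
  proof (cases "x = y")
    case False
    hence "f x \<noteq> f y" using injf that by (auto dest: inj_onD)
    thus ?thesis using False by (simp add: g_def cc_swap[of x y] cc_swap[of "f x" "f y"])
  qed simp
  have "(\<Prod>(i,j)\<in>PP I. cc (f (h i)) (f (h j))) =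
        (\<Prod>(i,j)\<in>PP I. cc (h i) (h j) * g (h i) (h j))"
    by (rule prod.cong[OF refl]) (auto simp: g_def cc_def)
  also have "\<dots> = (\<Prod>(i,j)\<in>PP I. cc (h i) (h j)) * (\<Prod>(i,j)\<in>PP I. g (h i) (h j))"
    by (simp add: prod.distrib case_prod_unfold)
  also have "(\<Prod>(i,j)\<in>PP I. g (h i) (h j)) = (\<Prod>(x,y)\<in>PP (h ` I). g x y)"
    by (rule reindex_pairs[OF inj sym])
  also have "\<dots> = (\<Prod>(x,y)\<in>PP (h ` I). cc (f x) (f y))"
    by (rule prod.cong[OF refl]) (auto simp: g_def cc_def PP_def)
  finally show ?thesis .
qed

lemma prod_sign_card:
  assumes "finite X"
  shows "(\<Prod>p\<in>X. (if Q p then -1 else 1 :: int)) = (-1) ^ card {p\<in>X. Q p}"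
proof -
  have "(\<Prod>p\<in>X. (if Q p then -1 else 1 :: int)) = (\<Prod>p\<in>X \<inter> {p. Q p}. -1) * (\<Prod>p\<in>X \<inter> - {p. Q p}. 1)"
    by (rule prod.If_cases[OF assms])
  also have "\<dots> = (-1) ^ card (X \<inter> {p. Q p})" by simp
  also have "X \<inter> {p. Q p} = {p\<in>X. Q p}" by auto
  finally show ?thesis .
qed

definition EE :: "'a::linorder list \<Rightarrow> int" where
  "EE v = (\<Prod>(i,j)\<in>PP {..<length v}. cc (v!i) (v!j))"

lemma EE_inv: "EE v = (-1) ^ inv_count v"
proof -
  have "EE v = (\<Prod>p\<in>PP {..<length v}. (if v ! snd p < v ! fst p then -1 else 1))"
    unfolding EE_def cc_def by (simp add: case_prod_unfold)
  also have "\<dots> = (-1) ^ card {p\<in>PP {..<length v}. v ! snd p < v ! fst p}"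
    by (rule prod_sign_card) (simp add: PP_finite)
  also have "{p\<in>PP {..<length v}. v ! snd p < v ! fst p} = {(i, j). i < j \<and> j < length v \<and> v ! j < v ! i}"
    by (auto simp: PP_def)
  finally show ?thesis unfolding inv_count_def .
qed

lemma EE_map:
  assumes "distinct w" "inj_on f (set w)"
  shows "EE (map f w) = EE w * (\<Prod>(x,y)\<in>PP (set w). cc (f x) (f y))"
proof -
  have inj: "inj_on (\<lambda>i. w ! i) {..<length w}" using assms(1)
    by (simp add: inj_on_def nth_eq_iff_index_eq)
  have im: "(\<lambda>i. w ! i) ` {..<length w} = set w" by (auto simp: set_conv_nth)
  have "EE (map f w) = (\<Prod>(i,j)\<in>PP {..<length w}. cc (f (w!i)) (f (w!j)))"
    unfolding EE_def by (rule prod.cong) (auto simp: PP_def)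
  also have "\<dots> = EE w * (\<Prod>(x,y)\<in>PP (set w). cc (f x) (f y))"
    using general_G[OF inj, of f] assms(2) unfolding im EE_def by simp
  finally show ?thesis .
qed

definition TT :: "(nat \<Rightarrow> nat) \<Rightarrow> nat set \<Rightarrow> int" where
  "TT \<sigma> A = (\<Prod>(a,b)\<in>PP A. cc (\<sigma> a) (\<sigma> b))"

lemma TT_comp:
  assumes "\<sigma> permutes A" "\<tau> permutes A"
  shows "TT (\<tau> \<circ> \<sigma>) A = TT \<sigma> A * TT \<tau> A"
proof -
  have inj: "inj_on \<sigma> A" using assms(1) by (rule permutes_inj_on)
  have injt: "inj_on \<tau> (\<sigma> ` A)" using assms by (simp add: permutes_inj_on)
  show ?thesis using general_G[OF inj injt] permutes_image[OF assms(1)]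
    unfolding TT_def by simp
qed

lemma TT_id: "TT id A = 1"
  unfolding TT_def by (rule prod.neutral) (auto simp: PP_def cc_def)

lemma TT_swap:
  assumes "finite A" "a \<in> A" "b \<in> A" "a < b"
  shows "TT (Transposition.transpose a b) A = -1"
proof -
  define M where "M = {r\<in>A. a < r \<and> r < b}"
  let ?t = "Transposition.transpose a b"
  have fM: "finite M" using assms by (simp add: M_def)
  have "TT ?t A = (\<Prod>p\<in>PP A. (if ?t (snd p) < ?t (fst p) then -1 else 1))"
    unfolding TT_def cc_def by (simp add: case_prod_unfold)
  also have "\<dots> = (-1) ^ card {p\<in>PP A. ?t (snd p) < ?t (fst p)}"
    by (rule prod_sign_card) (simp add: PP_finite assms)
  also have "{p\<in>PP A. ?t (snd p) < ?t (fst p)} = insert (a,b) (Pair a ` M \<union> (\<lambda>r. (r,b)) ` M)"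
    using assms by (auto simp: PP_def M_def Transposition.transpose_def split: if_splits)
  also have "card \<dots> = Suc (card M + card M)"
  proof -
    have "card (Pair a ` M \<union> (\<lambda>r. (r,b)) ` M) = card (Pair a ` M) + card ((\<lambda>r. (r,b)) ` M)"
      by (rule card_Un_disjoint) (use fM in \<open>auto simp: M_def\<close>)
    also have "\<dots> = card M + card M"
      by (simp add: card_image inj_on_def)
    finally show ?thesis using fM by (subst card_insert_disjoint) (auto simp: M_def)
  qed
  finally show ?thesis by simp
qed

lemma TT_sign:
  assumes "\<sigma> permutes A" "finite A"
  shows "TT \<sigma> A = sign \<sigma>"
  using assms
proof (induction rule: permutes_induct)
  case id thus ?case using TT_id[of A] by (simp add: id_def)
next
  case (swap a b p)
  have tp: "Transposition.transpose a b permutes A" using swap by (simp add: permutes_swap_id)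
  have sw: "TT (Transposition.transpose a b) A = -1"
  proof (cases "a < b")
    case True thus ?thesis using TT_swap assms swap by blast
  next
    case False hence "b < a" using swap by auto
    thus ?thesis using TT_swap[of A b a] assms swap by (simp add: transpose_commute)
  qed
  have "sign (Transposition.transpose a b \<circ> p) = sign (Transposition.transpose a b) * sign p"
    by (rule sign_compose) (use swap assms in \<open>auto intro: permutes_imp_permutation permutation_swap_id\<close>)
  thus ?case using TT_comp[OF swap(4) tp] swap sw by (simp add: sign_swap_id del: o_apply)
qed

definition pf :: "(nat \<Rightarrow> nat) \<Rightarrow> gen \<Rightarrow> gen" where
  "pf \<sigma> = (\<lambda>(k, i). (k, \<sigma> i))"

lemma perm_word_pf: "perm_word \<sigma> w = map (pf \<sigma>) w"
  by (simp add: perm_word_def pf_def)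

lemma pf_inj: "inj \<sigma> \<Longrightarrow> inj_on (pf \<sigma>) X"
  by (auto simp: pf_def inj_on_def dest: injD)

lemma alt_eval:
  assumes dw: "distinct w" and fB: "finite B" and BN: "B \<subseteq> {1..n}"
    and hS: "\<And>\<sigma>. \<sigma> permutes {1..n} \<Longrightarrow> (S = set (perm_word \<sigma> w) \<longleftrightarrow> \<sigma> permutes B)"
    and hT: "\<And>\<sigma>. \<sigma> permutes B \<Longrightarrow> (\<Prod>(x,y)\<in>PP (set w). cc (pf \<sigma> x) (pf \<sigma> y)) = TT \<sigma> B"
  shows "alt n w S = of_int (EE w) * of_nat (card {\<sigma>. \<sigma> permutes B})"
proof -
  have hterm: "of_int (sign \<sigma>) * word_elt (perm_word \<sigma> w) S =
      (if \<sigma> permutes B then (of_int (EE w) :: rat) else 0)" if sp: "\<sigma> permutes {1..n}" for \<sigma>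
  proof -
    have injs: "inj \<sigma>" using sp by (rule permutes_inj)
    have dist: "distinct (perm_word \<sigma> w)" unfolding perm_word_pf
      using dw pf_inj[OF injs] by (simp add: distinct_map)
    show ?thesis
    proof (cases "\<sigma> permutes B")
      case True
      have "EE (perm_word \<sigma> w) = EE w * TT \<sigma> B"
        unfolding perm_word_pf using EE_map[OF dw pf_inj[OF injs]] hT[OF True] by simp
      also have "\<dots> = EE w * sign \<sigma>" using TT_sign[OF True fB] by simp
      finally have c1: "(of_int (EE (perm_word \<sigma> w)) :: rat) = of_int (EE w * sign \<sigma>)" by (rule arg_cong)
      have c2: "(-1::rat)^inv_count (perm_word \<sigma> w) = of_int (EE (perm_word \<sigma> w))" by (simp add: EE_inv)
      have "S = set (perm_word \<sigma> w)" using hS[OF sp] True by blast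
      hence "word_elt (perm_word \<sigma> w) S = (-1::rat)^inv_count (perm_word \<sigma> w)"
        using dist unfolding word_elt_def by simp
      hence "of_int (sign \<sigma>) * word_elt (perm_word \<sigma> w) S = (of_int (sign \<sigma>) * of_int (EE w * sign \<sigma>) :: rat)"
        using c1 c2 by simp
      also have "\<dots> = of_int (sign \<sigma> * (EE w * sign \<sigma>))" by (simp only: of_int_mult)
      also have "\<dots> = (of_int (EE w) :: rat)"
      proof -
        have "sign \<sigma> * (EE w * sign \<sigma>) = EE w" by (simp add: mult.left_commute[of "sign \<sigma>" "EE w"])
        thus ?thesis by (rule arg_cong)
      qed
      finally have X: "of_int (sign \<sigma>) * word_elt (perm_word \<sigma> w) S = (of_int (EE w) :: rat)" .
      show ?thesis using True X by (simp only: if_True simp_thms)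
    next
      case False
      have "S \<noteq> set (perm_word \<sigma> w)"
      proof
        assume a: "S = set (perm_word \<sigma> w)"
        show False using False iffD1[OF hS[OF sp] a] by contradiction
      qed
      hence "word_elt (perm_word \<sigma> w) S = 0" unfolding word_elt_def by simp
      thus ?thesis using False by (simp only: if_False mult_zero_right)
    qed
  qed
  have "alt n w S = (\<Sum>\<sigma>\<in>{\<sigma>. \<sigma> permutes {1..n}}. (if \<sigma> permutes B then (of_int (EE w) :: rat) else 0))"
    unfolding alt_def by (rule sum.cong) (auto simp: hterm)
  also have "\<dots> = (\<Sum>\<sigma>\<in>{\<sigma>. \<sigma> permutes B}. (of_int (EE w) :: rat))"
  proof -
    have "{\<sigma>\<in>{\<sigma>. \<sigma> permutes {1..n}}. \<sigma> permutes B} = {\<sigma>. \<sigma> permutes B}"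
      using permutes_subset[OF _ BN] by blast
    thus ?thesis using sum.inter_filter[OF finite_permutations[of "{1..n}"], of "\<lambda>_. (of_int (EE w) :: rat)" "\<lambda>\<sigma>. \<sigma> permutes B"]
      by simp
  qed
  finally show ?thesis by simp
qed

lemma EE_nz: "EE (w::gen list) \<noteq> 0" by (simp add: EE_inv)

lemma card_perm_pos: "finite B \<Longrightarrow> card {\<sigma>. \<sigma> permutes B} \<noteq> 0"
  using finite_permutations[of B] permutes_id[of B] by (auto simp: card_eq_0_iff id_def)


lemma alt_zero:
  assumes "\<And>\<sigma>. \<sigma> permutes {1..n} \<Longrightarrow> S \<noteq> set (perm_word \<sigma> w)"
  shows "alt n w S = 0"
  unfolding alt_def by (rule sum.neutral) (use assms in \<open>auto simp: word_elt_def\<close>)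

lemma permutes_restrict:
  assumes sp: "\<sigma> permutes N" and BN: "B \<subseteq> N" and im: "\<sigma> ` B = B" and mN: "m \<in> N" and mB: "m \<notin> B"
    and hfix: "\<And>x. x \<in> N \<Longrightarrow> x \<notin> B \<Longrightarrow> x \<noteq> m \<Longrightarrow> \<sigma> x = x"
  shows "\<sigma> permutes B"
proof -
  have inj: "inj \<sigma>" using sp by (rule permutes_inj)
  have fm: "\<sigma> m = m"
  proof (rule ccontr)
    assume ne: "\<sigma> m \<noteq> m"
    have inN: "\<sigma> m \<in> N" using sp mN by (simp add: permutes_in_image)
    have "\<sigma> m \<notin> B"
    proof
      assume "\<sigma> m \<in> B"
      then obtain b where "b \<in> B" "\<sigma> m = \<sigma> b" using im by (metis imageE)
      hence "m = b" using inj by (auto dest: injD)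
      thus False using \<open>b \<in> B\<close> mB by simp
    qed
    hence "\<sigma> (\<sigma> m) = \<sigma> m" using hfix[OF inN] ne \<open>\<sigma> m \<notin> B\<close> by blast
    hence "\<sigma> m = m" using inj by (auto dest: injD)
    thus False using ne by simp
  qed
  show ?thesis unfolding permutes_altdef
  proof
    show "bij_betw \<sigma> B B" using inj im by (auto simp: bij_betw_def intro: inj_on_subset)
    show "{x. \<sigma> x \<noteq> x} \<subseteq> B"
    proof
      fix x assume "x \<in> {x. \<sigma> x \<noteq> x}"
      hence ne: "\<sigma> x \<noteq> x" by simp
      show "x \<in> B"
      proof (rule ccontr)
        assume "x \<notin> B"
        moreover have "x \<in> N" using ne sp by (meson permutes_not_in)
        ultimately show False using hfix fm ne by (cases "x = m") auto
      qed
    qed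
  qed
qed

lemma PP_mono_image:
  fixes h :: "'a::linorder \<Rightarrow> 'b::linorder"
  assumes mono: "\<And>a b. a < b \<Longrightarrow> h a < h b"
  shows "(\<Prod>(x,y)\<in>PP (h ` I). g x y) = (\<Prod>(a,b)\<in>PP I. (g (h a) (h b) :: 'c::comm_monoid_mult))"
proof -
  have inj: "inj h" by (metis mono inj_on_def less_irrefl linorder_neqE)
  have eq: "PP (h ` I) = (\<lambda>(a,b). (h a, h b)) ` PP I"
  proof
    show "PP (h ` I) \<subseteq> (\<lambda>(a,b). (h a, h b)) ` PP I"
    proof
      fix p assume "p \<in> PP (h ` I)"
      then obtain a b where ab: "a \<in> I" "b \<in> I" "p = (h a, h b)" "h a < h b" by (auto simp: PP_def)
      have "a < b" using ab(4) mono by (metis less_asym linorder_neqE)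
      thus "p \<in> (\<lambda>(a,b). (h a, h b)) ` PP I" using ab by (auto simp: PP_def)
    qed
  next
    show "(\<lambda>(a,b). (h a, h b)) ` PP I \<subseteq> PP (h ` I)" using mono by (auto simp: PP_def)
  qed
  have injp: "inj_on (\<lambda>(a,b). (h a, h b)) (PP I)" using inj by (auto simp: inj_on_def dest: injD)
  show ?thesis unfolding eq by (subst prod.reindex[OF injp]) (simp add: case_prod_unfold)
qed

lemma theta_mono: "a < b \<Longrightarrow> theta a < theta b" by (simp add: theta_def)

lemma hT_theta:
  "(\<Prod>(x,y)\<in>PP (theta ` B). cc (pf \<sigma> x) (pf \<sigma> y)) = TT \<sigma> B"
  unfolding TT_def using PP_mono_image[OF theta_mono, where g="\<lambda>x y. cc (pf \<sigma> x) (pf \<sigma> y)" and I=B]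
  by (simp add: pf_def theta_def cc_def)

lemma set_perm_word: "set (perm_word \<sigma> w) = pf \<sigma> ` set w"
  by (simp add: perm_word_pf)

lemma pf_theta: "pf \<sigma> (theta i) = theta (\<sigma> i)" by (simp add: pf_def theta_def)
lemma pf_xi: "pf \<sigma> (xi i) = xi (\<sigma> i)" by (simp add: pf_def xi_def)
lemma pf_rho: "pf \<sigma> (rho i) = rho (\<sigma> i)" by (simp add: pf_def rho_def)

lemma inj_theta: "inj theta" by (simp add: inj_on_def theta_def)

lemma delta1_nz:
  assumes "n \<ge> 1" shows "Delta1 n \<noteq> (\<lambda>_. 0)"
proof -
  define w where "w = map theta [1..<n]"
  define B where "B = {1..<n}"
  have sw: "set w = theta ` B" by (simp add: w_def B_def)
  have dw: "distinct w" unfolding w_def by (auto simp: distinct_map theta_def inj_on_def)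
  have main: "alt n w (set w) = of_int (EE w) * of_nat (card {\<sigma>. \<sigma> permutes B})"
  proof (rule alt_eval[OF dw])
    show "finite B" by (simp add: B_def)
    show "B \<subseteq> {1..n}" by (auto simp: B_def)
  next
    fix \<sigma> :: "nat \<Rightarrow> nat" assume sp: "\<sigma> permutes {1..n}"
    have "set (perm_word \<sigma> w) = theta ` (\<sigma> ` B)"
      unfolding set_perm_word sw image_image pf_theta by simp
    hence "(set w = set (perm_word \<sigma> w)) = (theta ` B = theta ` (\<sigma> ` B))"
      by (simp only: sw)
    also have "\<dots> = (B = \<sigma> ` B)" by (rule inj_image_eq_iff[OF inj_theta])
    also have "\<dots> = (\<sigma> ` B = B)" by (rule eq_commute)
    also have "\<dots> = (\<sigma> permutes B)"
    proof
      assume im: "\<sigma> ` B = B"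
      show "\<sigma> permutes B"
        by (rule permutes_restrict[OF sp _ im, where m=n]) (use assms in \<open>auto simp: B_def\<close>)
    qed (rule permutes_image)
    finally show "(set w = set (perm_word \<sigma> w)) = (\<sigma> permutes B)" .
  next
    fix \<sigma> :: "nat \<Rightarrow> nat" assume "\<sigma> permutes B"
    show "(\<Prod>(x,y)\<in>PP (set w). cc (pf \<sigma> x) (pf \<sigma> y)) = TT \<sigma> B"
      unfolding sw by (rule hT_theta)
  qed
  have "alt n w (set w) \<noteq> 0"
    unfolding main using EE_nz[of w] card_perm_pos[of B] by (simp add: B_def)
  moreover have "Delta1 n = alt n w" by (simp add: Delta1_def w_def)
  ultimately show ?thesis
  proof (intro notI)
    assume "alt n w (set w) \<noteq> 0" "Delta1 n = alt n w" "Delta1 n = (\<lambda>_. 0)"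
    hence "alt n w = (\<lambda>_. 0)" by simp
    hence "alt n w (set w) = 0" by (rule fun_cong[where x="set w", THEN trans]) simp
    thus False using \<open>alt n w (set w) \<noteq> 0\<close> by contradiction
  qed
qed


lemma delta2_nz:
  assumes n3: "n \<ge> 3" shows "Delta2 n \<noteq> (\<lambda>_. 0)"
proof -
  define w where "w = [theta 1, xi 2, rho 2] @ map theta [3..<n]"
  define B where "B = insert 1 {3..<n}"
  define S where "S = set w"
  have sw: "set w = insert (xi 2) (insert (rho 2) (theta ` B))" by (auto simp: w_def B_def)
  have dw: "distinct w" unfolding w_def by (auto simp: distinct_map theta_def xi_def rho_def inj_on_def)
  have thetas: "{i. theta i \<in> insert (xi a) (insert (rho b) (theta ` Y))} = Y" for a b Y
    by (auto simp: theta_def xi_def rho_def)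
  have main: "alt n w S = of_int (EE w) * of_nat (card {\<sigma>. \<sigma> permutes B})"
    unfolding S_def
  proof (rule alt_eval[OF dw])
    show "finite B" by (simp add: B_def)
    show "B \<subseteq> {1..n}" using n3 by (auto simp: B_def)
  next
    fix \<sigma> :: "nat \<Rightarrow> nat" assume sp: "\<sigma> permutes {1..n}"
    have sp': "set (perm_word \<sigma> w) = insert (xi (\<sigma> 2)) (insert (rho (\<sigma> 2)) (theta ` (\<sigma> ` B)))"
      unfolding set_perm_word sw by (simp add: image_image pf_theta pf_xi pf_rho)
    show "(set w = set (perm_word \<sigma> w)) = (\<sigma> permutes B)"
    proof
      assume eq: "set w = set (perm_word \<sigma> w)"
      have "xi (\<sigma> 2) \<in> set w" unfolding eq sp' by simp
      hence s2: "\<sigma> 2 = 2" unfolding sw by (auto simp: theta_def xi_def rho_def)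
      have im: "\<sigma> ` B = B" using arg_cong[OF eq, of "\<lambda>X. {i. theta i \<in> X}"] unfolding sp' sw thetas by simp
      show "\<sigma> permutes B"
      proof (rule permutes_restrict[OF sp _ im, where m=n])
        fix x assume x: "x \<in> {1..n}" "x \<notin> B" "x \<noteq> n"
        hence "x = 2" by (auto simp: B_def)
        thus "\<sigma> x = x" using s2 by simp
      qed (use n3 in \<open>auto simp: B_def\<close>)
    next
      assume pb: "\<sigma> permutes B"
      have "\<sigma> 2 = 2" using pb by (rule permutes_not_in) (simp add: B_def)
      thus "set w = set (perm_word \<sigma> w)" unfolding sp' sw permutes_image[OF pb] by simp
    qed
  next
    fix \<sigma> :: "nat \<Rightarrow> nat" assume pb: "\<sigma> permutes B"
    have s2: "\<sigma> 2 = 2" using pb by (rule permutes_not_in) (simp add: B_def)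
    have "(\<Prod>(x,y)\<in>PP (theta ` B). cc (pf \<sigma> x) (pf \<sigma> y)) = (\<Prod>(x,y)\<in>PP (set w). cc (pf \<sigma> x) (pf \<sigma> y))"
    proof (rule prod.mono_neutral_left)
      show "finite (PP (set w))" by (simp add: PP_finite)
      show "PP (theta ` B) \<subseteq> PP (set w)" unfolding sw PP_def by auto
      show "\<forall>p\<in>PP (set w) - PP (theta ` B). (\<lambda>(x,y). cc (pf \<sigma> x) (pf \<sigma> y)) p = 1"
        unfolding sw PP_def using s2 by (auto simp: theta_def xi_def rho_def pf_def cc_def)
    qed
    thus "(\<Prod>(x,y)\<in>PP (set w). cc (pf \<sigma> x) (pf \<sigma> y)) = TT \<sigma> B"
      using hT_theta[of \<sigma> B] by simp
  qed
  have z2: "alt n ([theta 2, xi 1, rho 2] @ map theta [3..<n]) S = 0"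
  proof (rule alt_zero)
    fix \<sigma> :: "nat \<Rightarrow> nat" assume sp: "\<sigma> permutes {1..n}"
    show "S \<noteq> set (perm_word \<sigma> ([theta 2, xi 1, rho 2] @ map theta [3..<n]))"
    proof
      assume eq: "S = set (perm_word \<sigma> ([theta 2, xi 1, rho 2] @ map theta [3..<n]))"
      have "xi (\<sigma> 1) \<in> S" "rho (\<sigma> 2) \<in> S" unfolding eq by (simp_all add: perm_word_def theta_def xi_def rho_def)
      hence "\<sigma> 1 = 2" "\<sigma> 2 = 2" unfolding S_def sw by (auto simp: theta_def xi_def rho_def)
      hence "\<sigma> 1 = \<sigma> 2" by simp
      hence "(1::nat) = 2" using permutes_inj[OF sp] by (rule injD[rotated])
      thus False by simp
    qed
  qed
  have z3: "alt n ([theta 2, xi 2, rho 1] @ map theta [3..<n]) S = 0"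
  proof (rule alt_zero)
    fix \<sigma> :: "nat \<Rightarrow> nat" assume sp: "\<sigma> permutes {1..n}"
    show "S \<noteq> set (perm_word \<sigma> ([theta 2, xi 2, rho 1] @ map theta [3..<n]))"
    proof
      assume eq: "S = set (perm_word \<sigma> ([theta 2, xi 2, rho 1] @ map theta [3..<n]))"
      have "xi (\<sigma> 2) \<in> S" "rho (\<sigma> 1) \<in> S" unfolding eq by (simp_all add: perm_word_def theta_def xi_def rho_def)
      hence "\<sigma> 2 = 2" "\<sigma> 1 = 2" unfolding S_def sw by (auto simp: theta_def xi_def rho_def)
      hence "\<sigma> 1 = \<sigma> 2" by simp
      hence "(1::nat) = 2" using permutes_inj[OF sp] by (rule injD[rotated])
      thus False by simp
    qed
  qed
  have val: "Delta2 n S = of_int (EE w) * of_nat (card {\<sigma>. \<sigma> permutes B})"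
    unfolding Delta2_def using main z2 z3 by (simp add: w_def)
  have "Delta2 n S \<noteq> 0"
    unfolding val using EE_nz[of w] card_perm_pos[of B] by (simp add: B_def)
  thus ?thesis by (intro notI) simp
qed

theorem proposition4p5:
  shows "(\<forall>n::nat. n \<ge> 1 \<longrightarrow> Delta1 n \<noteq> (\<lambda>_. 0))
       \<and> (\<forall>n::nat. n \<ge> 3 \<longrightarrow> Delta2 n \<noteq> (\<lambda>_. 0))"
  using delta1_nz delta2_nz by blast

end
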